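(* Let $(\alpha,\beta)=(\alpha_0,\beta_0)\in\Delta_K$, $(\alpha_n,\beta_n)=T^n(\alpha,\beta)$, and $n\in\mathbb{Z}_{\ge0}$. Write $\varepsilon(\alpha_n,\beta_n)=(i',j')$ and let $k\in\{0,1,2\}$ be the unique element with $k\ne i'$, $k\ne j'$. Then $\varepsilon(\alpha_{n+1},\beta_{n+1})\neq(i',k)$ and $\varepsilon(\alpha_{n+1},\beta_{n+1})\neq(k,i')$. (Equivalently, the following 12 two-letter words never occur as $\varepsilon(\alpha_n,\beta_n)\varepsilon(\alpha_{n+1},\beta_{n+1})$: $(1,2)$ followed by $(0,1)$ or $(1,0)$; $(2,1)$ followed by $(0,2)$ or $(2,0)$; $(0,1)$ followed by $(0,2)$ or $(2,0)$; $(1,0)$ followed by $(1,2)$ or $(2,1)$; $(0,2)$ followed by $(0,1)$ or $(1,0)$; $(2,0)$ followed by $(1,2)$ or $(2,1)$.)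
   Context: Let $K\subset\mathbb{R}$ be a real cubic number field, $N=N_{K/\mathbb{Q}}$ its norm. Fix $r=p/q$ with $p,q$ positive coprime integers and $3\nmid p$. Let $\Delta_K=\{(\alpha,\beta)\in K^2:\ 1,\alpha,\beta \text{ linearly independent over }\mathbb{Q},\ \alpha,\beta>0,\ \alpha+\beta<1\}$ and $Ind=\{(i,j): i,j\in\{0,1,2\},\ i\neq j\}$. Let $\Delta=\{(x,y)\in\mathbb{R}^2: x,y\ge 0,\ x+y\le 1\}$ and $\triangle(1,2)=\{(x,y)\in\Delta: x\ge y\}$, $\triangle(2,1)=\{x\le y\}$, $\triangle(0,1)=\{2x+y-1\le 0\}$, $\triangle(1,0)=\{2x+y-1\ge 0\}$, $\triangle(0,2)=\{x+2y-1\le0\}$, $\triangle(2,0)=\{x+2y-1\ge 0\}$ (all subsets of $\Delta$). Maps $T_{(i,j)}:\triangle(i,j)\to\Delta$: $T_{(1,2)}(x,y)=(\frac{x-y}{1-y},\frac{y}{1-y})$, $T_{(2,1)}(x,y)=(\frac{x}{1-x},\frac{y-x}{1-x})$, $T_{(0,1)}(x,y)=(\frac{x}{1-x},\frac{y}{1-x})$, $T_{(1,0)}(x,y)=(\frac{2x+y-1}{x+y},\frac{y}{x+y})$, $T_{(0,2)}(x,y)=(\frac{x}{1-y},\frac{y}{1-y})$, $T_{(2,0)}(x,y)=(\frac{x}{x+y},\frac{x+2y-1}{x+y})$. For $(\alpha,\beta)\in\Delta_K$ put $\gamma=1-\alpha-\beta$ and $v_{\{1,2\}}=\frac{\alpha^r\beta^r}{|N(\alpha)N(\beta)|}$,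 $v_{\{0,1\}}=\frac{\alpha^r\gamma^r}{|N(\alpha)N(\gamma)|}$, $v_{\{0,2\}}=\frac{\beta^r\gamma^r}{|N(\beta)N(\gamma)|}$; the maximum is attained at a unique pair $\{i_0,j_0\}$. $\varepsilon(\alpha,\beta)$ is the ordered pair $(i,j)\in Ind$ with $\{i,j\}=\{i_0,j_0\}$ and $(\alpha,\beta)\in\triangle(i,j)$, and $T(\alpha,\beta)=T_{\varepsilon(\alpha,\beta)}(\alpha,\beta)$ (a map $\Delta_K\to\Delta_K$). *)

theory Defs
  imports Complex_Main
begin

definition rat_indep3 :: "real \<Rightarrow> real \<Rightarrow> real \<Rightarrow> bool" where
  "rat_indep3 x y z \<longleftrightarrow>
     (\<forall>a b c. a \<in> \<rat> \<and> b \<in> \<rat> \<and> c \<in> \<rat> \<and> a*x + b*y + c*z = 0 \<longrightarrow> a = 0 \<and> b = 0 \<and> c = 0)"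

definition rat_span3 :: "real \<Rightarrow> real \<Rightarrow> real \<Rightarrow> real set" where
  "rat_span3 x y z = {a*x + b*y + c*z | a b c. a \<in> \<rat> \<and> b \<in> \<rat> \<and> c \<in> \<rat>}"

definition real_cubic_field :: "real set \<Rightarrow> bool" where
  "real_cubic_field K \<longleftrightarrow>
     1 \<in> K \<and>
     (\<forall>x\<in>K. \<forall>y\<in>K. x + y \<in> K \<and> x * y \<in> K) \<and>
     (\<forall>x\<in>K. - x \<in> K) \<and>
     (\<forall>x\<in>K. x \<noteq> 0 \<longrightarrow> inverse x \<in> K) \<and>
     (\<exists>b0 b1 b2. rat_indep3 b0 b1 b2 \<and> K = rat_span3 b0 b1 b2)"

definition cf_basis :: "real set \<Rightarrow> real \<times> real \<times> real" where
  "cf_basis K = (SOME (b0, b1, b2). rat_indep3 b0 b1 b2 \<and> K = rat_span3 b0 b1 b2)"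

definition coords3 :: "real \<times> real \<times> real \<Rightarrow> real \<Rightarrow> real \<times> real \<times> real" where
  "coords3 B y = (case B of (b0, b1, b2) \<Rightarrow>
     (THE (c0, c1, c2). c0 \<in> \<rat> \<and> c1 \<in> \<rat> \<and> c2 \<in> \<rat> \<and> y = c0*b0 + c1*b1 + c2*b2))"

definition det3 :: "(nat \<Rightarrow> nat \<Rightarrow> real) \<Rightarrow> real" where
  "det3 M = M 0 0 * (M 1 1 * M 2 2 - M 1 2 * M 2 1)
          - M 0 1 * (M 1 0 * M 2 2 - M 1 2 * M 2 0)
          + M 0 2 * (M 1 0 * M 2 1 - M 1 1 * M 2 0)"

definition bvec :: "real \<times> real \<times> real \<Rightarrow> nat \<Rightarrow> real" where
  "bvec B i = (case B of (b0, b1, b2) \<Rightarrow> if i = 0 then b0 else if i = 1 then b1 else b2)"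

definition cvec :: "real \<times> real \<times> real \<Rightarrow> nat \<Rightarrow> real" where
  "cvec c j = (case c of (c0, c1, c2) \<Rightarrow> if j = 0 then c0 else if j = 1 then c1 else c2)"

text \<open>Norm N_{K/Q}(x): determinant of the Q-linear map y \<mapsto> x*y on K,
  written in the rational basis of K (independent of the basis chosen).\<close>
definition cf_norm :: "real set \<Rightarrow> real \<Rightarrow> real" where
  "cf_norm K x = (let B = cf_basis K in
     det3 (\<lambda>i j. cvec (coords3 B (x * bvec B i)) j))"

definition DeltaK :: "real set \<Rightarrow> (real \<times> real) set" where
  "DeltaK K = {(a, b). a \<in> K \<and> b \<in> K \<and> rat_indep3 1 a b \<and> a > 0 \<and> b > 0 \<and> a + b < 1}"

definition Ind :: "(nat \<times> nat) set" where
  "Ind = {(i, j). i \<in> {0,1,2} \<and> j \<in> {0,1,2} \<and> i \<noteq> j}"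

definition Delta :: "(real \<times> real) set" where
  "Delta = {(x, y). x \<ge> 0 \<and> y \<ge> 0 \<and> x + y \<le> 1}"

definition tri :: "nat \<times> nat \<Rightarrow> (real \<times> real) set" where
  "tri ij = {(x, y) \<in> Delta.
      (if ij = (1,2) then x \<ge> y
       else if ij = (2,1) then x \<le> y
       else if ij = (0,1) then 2*x + y - 1 \<le> 0
       else if ij = (1,0) then 2*x + y - 1 \<ge> 0
       else if ij = (0,2) then x + 2*y - 1 \<le> 0
       else if ij = (2,0) then x + 2*y - 1 \<ge> 0
       else False)}"

definition Tmap :: "nat \<times> nat \<Rightarrow> real \<times> real \<Rightarrow> real \<times> real" where
  "Tmap ij p = (case p of (x, y) \<Rightarrow>
      (if ij = (1,2) then ((x - y) / (1 - y), y / (1 - y))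
       else if ij = (2,1) then (x / (1 - x), (y - x) / (1 - x))
       else if ij = (0,1) then (x / (1 - x), y / (1 - x))
       else if ij = (1,0) then ((2*x + y - 1) / (x + y), y / (x + y))
       else if ij = (0,2) then (x / (1 - y), y / (1 - y))
       else if ij = (2,0) then (x / (x + y), (x + 2*y - 1) / (x + y))
       else (x, y)))"

text \<open>Coordinates: index 0 is gamma = 1 - alpha - beta, 1 is alpha, 2 is beta.\<close>
definition coordab :: "real \<times> real \<Rightarrow> nat \<Rightarrow> real" where
  "coordab p i = (case p of (a, b) \<Rightarrow> if i = 0 then 1 - a - b else if i = 1 then a else b)"

definition vval :: "real set \<Rightarrow> real \<Rightarrow> real \<times> real \<Rightarrow> nat \<Rightarrow> nat \<Rightarrow> real" where
  "vval K r p i j = (coordab p i powr r * coordab p j powr r)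
                     / \<bar>cf_norm K (coordab p i) * cf_norm K (coordab p j)\<bar>"

definition eps :: "real set \<Rightarrow> real \<Rightarrow> real \<times> real \<Rightarrow> nat \<times> nat" where
  "eps K r p = (THE (i, j). (i, j) \<in> Ind \<and>
      (\<forall>(i', j') \<in> Ind. {i', j'} \<noteq> {i, j} \<longrightarrow> vval K r p i' j' < vval K r p i j) \<and>
      p \<in> tri (i, j))"

definition Tcf :: "real set \<Rightarrow> real \<Rightarrow> real \<times> real \<Rightarrow> real \<times> real" where
  "Tcf K r p = Tmap (eps K r p) p"

end

theory Submission
  imports Defs
begin

lemma rcf_props:
  assumes "real_cubic_field K"
  shows "1 \<in> K" "\<And>x y. x \<in> K \<Longrightarrow> y \<in> K \<Longrightarrow> x + y \<in> K"
    "\<And>x y. x \<in> K \<Longrightarrow> y \<in> K \<Longrightarrow> x * y \<in> K"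
    "\<And>x. x \<in> K \<Longrightarrow> - x \<in> K"
    "\<And>x. x \<in> K \<Longrightarrow> x \<noteq> 0 \<Longrightarrow> inverse x \<in> K"
  using assms unfolding real_cubic_field_def by auto

lemma rcf_diff: "real_cubic_field K \<Longrightarrow> x \<in> K \<Longrightarrow> y \<in> K \<Longrightarrow> x - y \<in> K"
  using rcf_props[of K] by (metis diff_conv_add_uminus)

lemma rcf_0: "real_cubic_field K \<Longrightarrow> 0 \<in> K"
  using rcf_props[of K] rcf_diff[of K 1 1] by simp

lemma rcf_div: "real_cubic_field K \<Longrightarrow> x \<in> K \<Longrightarrow> y \<in> K \<Longrightarrow> x / y \<in> K"
  using rcf_props[of K] rcf_0[of K] by (cases "y = 0") (auto simp: divide_inverse)

lemma rcf_nat: "real_cubic_field K \<Longrightarrow> real m \<in> K"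
  by (induction m) (auto simp: rcf_0 rcf_props)

lemma rcf_int: assumes K: "real_cubic_field K" shows "real_of_int m \<in> K"
proof (cases "m \<ge> 0")
  case True then show ?thesis using rcf_nat[OF K, of "nat m"] by auto
next
  case False
  from K have "real (nat (-m)) \<in> K" by (rule rcf_nat)
  then have "- real (nat (-m)) \<in> K" using rcf_props(4)[OF K] by blast
  then show ?thesis using False by auto
qed

lemma rcf_rat: "real_cubic_field K \<Longrightarrow> c \<in> \<rat> \<Longrightarrow> c \<in> K"
  by (erule Rats_cases') (auto intro: rcf_div rcf_int)

lemma rcf_basis:
  assumes "real_cubic_field K"
  shows "rat_indep3 (bvec (cf_basis K) 0) (bvec (cf_basis K) 1) (bvec (cf_basis K) 2)
      \<and> K = rat_span3 (bvec (cf_basis K) 0) (bvec (cf_basis K) 1) (bvec (cf_basis K) 2)"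
proof -
  from assms obtain b0 b1 b2 where "rat_indep3 b0 b1 b2 \<and> K = rat_span3 b0 b1 b2"
    unfolding real_cubic_field_def by blast
  then have "\<exists>B. (case B of (b0, b1, b2) \<Rightarrow> rat_indep3 b0 b1 b2 \<and> K = rat_span3 b0 b1 b2)"
    by (intro exI[of _ "(b0,b1,b2)"]) simp
  then have "(case cf_basis K of (b0, b1, b2) \<Rightarrow> rat_indep3 b0 b1 b2 \<and> K = rat_span3 b0 b1 b2)"
    unfolding cf_basis_def by (rule someI_ex)
  then show ?thesis by (cases "cf_basis K") (simp add: bvec_def)
qed

lemma indep_zero:
  assumes "rat_indep3 b0 b1 b2" "c0 \<in> \<rat>" "c1 \<in> \<rat>" "c2 \<in> \<rat>"
    "d0 \<in> \<rat>" "d1 \<in> \<rat>" "d2 \<in> \<rat>"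
    "c0*b0 + c1*b1 + c2*b2 = d0*b0 + d1*b1 + d2*b2"
  shows "c0 = d0 \<and> c1 = d1 \<and> c2 = d2"
proof -
  have "(c0-d0)*b0 + (c1-d1)*b1 + (c2-d2)*b2 = 0" using assms(8) by (simp add: algebra_simps)
  moreover have "c0-d0 \<in> \<rat>" "c1-d1 \<in> \<rat>" "c2-d2 \<in> \<rat>" using assms by auto
  ultimately show ?thesis using assms(1) unfolding rat_indep3_def by (metis eq_iff_diff_eq_0)
qed

lemma coords3_char:
  assumes "rat_indep3 (bvec B 0) (bvec B 1) (bvec B 2)" "d0 \<in> \<rat>" "d1 \<in> \<rat>" "d2 \<in> \<rat>"
    "y = d0*bvec B 0 + d1*bvec B 1 + d2*bvec B 2"
  shows "coords3 B y = (d0,d1,d2)"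
proof -
  obtain b0 b1 b2 where B: "B = (b0,b1,b2)" by (cases B) auto
  have ind: "rat_indep3 b0 b1 b2" using assms(1) B by (simp add: bvec_def)
  have y: "y = d0*b0 + d1*b1 + d2*b2" using assms(5) B by (simp add: bvec_def)
  have "(THE (c0, c1, c2). c0 \<in> \<rat> \<and> c1 \<in> \<rat> \<and> c2 \<in> \<rat> \<and> y = c0*b0 + c1*b1 + c2*b2) = (d0,d1,d2)"
  proof (rule the_equality)
    show "case (d0, d1, d2) of (c0, c1, c2) \<Rightarrow> c0 \<in> \<rat> \<and> c1 \<in> \<rat> \<and> c2 \<in> \<rat> \<and> y = c0*b0 + c1*b1 + c2*b2"
      using assms(2-4) y by simp
  next
    fix c assume "case c of (c0, c1, c2) \<Rightarrow> c0 \<in> \<rat> \<and> c1 \<in> \<rat> \<and> c2 \<in> \<rat> \<and> y = c0*b0 + c1*b1 + c2*b2"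
    moreover obtain c0 c1 c2 where c: "c = (c0,c1,c2)" by (cases c)
    ultimately have h: "c0 \<in> \<rat>" "c1 \<in> \<rat>" "c2 \<in> \<rat>" "y = c0*b0 + c1*b1 + c2*b2" by auto
    have "c0 = d0 \<and> c1 = d1 \<and> c2 = d2" 
      by (rule indep_zero[OF ind h(1-3) assms(2-4)]) (use h(4) y in simp)
    then show "c = (d0,d1,d2)" using c by simp
  qed
  then show ?thesis using B by (simp add: coords3_def)
qed

lemma sum3: "(\<Sum>j<(3::nat). f j) = f 0 + f 1 + (f 2 :: real)"
  by (simp add: eval_nat_numeral)

definition Mx :: "real set \<Rightarrow> real \<Rightarrow> nat \<Rightarrow> nat \<Rightarrow> real" where
  "Mx K x i j = cvec (coords3 (cf_basis K) (x * bvec (cf_basis K) i)) j"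

lemma norm_Mx: "cf_norm K x = det3 (Mx K x)"
  by (simp add: cf_norm_def Mx_def[abs_def] Let_def)

lemma bvec_K: assumes "real_cubic_field K" shows "bvec (cf_basis K) i \<in> K"
proof -
  let ?b = "bvec (cf_basis K)"
  have sp: "K = rat_span3 (?b 0) (?b 1) (?b 2)" using rcf_basis[OF assms] by blast
  have "?b i = ?b 0 \<or> ?b i = ?b 1 \<or> ?b i = ?b 2" by (cases "cf_basis K") (auto simp: bvec_def)
  moreover have "?b 0 \<in> rat_span3 (?b 0) (?b 1) (?b 2)" unfolding rat_span3_def
    by (rule CollectI, rule exI[of _ 1], rule exI[of _ 0], rule exI[of _ 0]) simp
  moreover have "?b 1 \<in> rat_span3 (?b 0) (?b 1) (?b 2)" unfolding rat_span3_def
    by (rule CollectI, rule exI[of _ 0], rule exI[of _ 1], rule exI[of _ 0]) simp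
  moreover have "?b 2 \<in> rat_span3 (?b 0) (?b 1) (?b 2)" unfolding rat_span3_def
    by (rule CollectI, rule exI[of _ 0], rule exI[of _ 0], rule exI[of _ 1]) simp
  ultimately show ?thesis by (metis sp)
qed

lemma Mx_spec:
  assumes K: "real_cubic_field K" and x: "x \<in> K"
  shows "x * bvec (cf_basis K) i = (\<Sum>j<3. Mx K x i j * bvec (cf_basis K) j)" "Mx K x i j \<in> \<rat>"
proof -
  let ?b = "bvec (cf_basis K)"
  have ind: "rat_indep3 (?b 0) (?b 1) (?b 2)" and sp: "K = rat_span3 (?b 0) (?b 1) (?b 2)"
    using rcf_basis[OF K] by blast+
  have "x * ?b i \<in> K" using x bvec_K[OF K] rcf_props(3)[OF K] by blast
  then obtain d0 d1 d2 where d: "d0 \<in> \<rat>" "d1 \<in> \<rat>" "d2 \<in> \<rat>" "x * ?b i = d0 * ?b 0 + d1 * ?b 1 + d2 * ?b 2"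
    by (subst (asm) sp) (auto simp: rat_span3_def)
  have c: "coords3 (cf_basis K) (x * ?b i) = (d0,d1,d2)" by (rule coords3_char[OF ind d])
  show "x * ?b i = (\<Sum>j<3. Mx K x i j * ?b j)" unfolding sum3 Mx_def c using d(4) by (simp add: cvec_def)
  show "Mx K x i j \<in> \<rat>" unfolding Mx_def c using d by (simp add: cvec_def)
qed

lemma Mx_unique:
  assumes K: "real_cubic_field K" and x: "x \<in> K"
    and d: "\<And>j. d j \<in> \<rat>" and e: "x * bvec (cf_basis K) i = (\<Sum>j<3. d j * bvec (cf_basis K) j)"
    and j: "j < 3"
  shows "Mx K x i j = d j"
proof -
  let ?b = "bvec (cf_basis K)"
  have ind: "rat_indep3 (?b 0) (?b 1) (?b 2)" using rcf_basis[OF K] by blast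
  have c: "coords3 (cf_basis K) (x * ?b i) = (d 0, d 1, d 2)"
    by (rule coords3_char[OF ind d d d]) (use e in \<open>simp add: sum3\<close>)
  have "j = 0 \<or> j = 1 \<or> j = 2" using j by auto
  then show ?thesis by (auto simp: Mx_def c cvec_def)
qed

lemma det3_cong: "(\<And>i j. i < 3 \<Longrightarrow> j < 3 \<Longrightarrow> A i j = A' i j) \<Longrightarrow> det3 A = det3 A'"
  unfolding det3_def by simp

lemma det3_mult: "det3 (\<lambda>i j. \<Sum>k<3. A i k * B k j) = det3 A * det3 B"
  unfolding det3_def sum3 by algebra

lemma Mx_mult:
  assumes K: "real_cubic_field K" and x: "x \<in> K" and y: "y \<in> K" and j: "j < 3"
  shows "Mx K (x*y) i j = (\<Sum>k<3. Mx K y i k * Mx K x k j)"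
proof (rule Mx_unique[OF K _ _ _ j])
  let ?b = "bvec (cf_basis K)"
  show "x * y \<in> K" using x y rcf_props(3)[OF K] by blast
  show "\<And>j. (\<Sum>k<3. Mx K y i k * Mx K x k j) \<in> \<rat>"
    using Mx_spec(2)[OF K x] Mx_spec(2)[OF K y] by (simp add: sum3)
  have e: "y * ?b i = Mx K y i 0 * ?b 0 + Mx K y i 1 * ?b 1 + Mx K y i 2 * ?b 2"
    using Mx_spec(1)[OF K y, of i] by (simp add: sum3)
  have e0: "x * ?b 0 = Mx K x 0 0 * ?b 0 + Mx K x 0 1 * ?b 1 + Mx K x 0 2 * ?b 2"
    using Mx_spec(1)[OF K x, of 0] by (simp add: sum3)
  have e1: "x * ?b 1 = Mx K x 1 0 * ?b 0 + Mx K x 1 1 * ?b 1 + Mx K x 1 2 * ?b 2"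
    using Mx_spec(1)[OF K x, of 1] by (simp add: sum3)
  have e2: "x * ?b 2 = Mx K x 2 0 * ?b 0 + Mx K x 2 1 * ?b 1 + Mx K x 2 2 * ?b 2"
    using Mx_spec(1)[OF K x, of 2] by (simp add: sum3)
  have "x * y * ?b i = x * (y * ?b i)" by simp
  also have "\<dots> = Mx K y i 0 * (x * ?b 0) + Mx K y i 1 * (x * ?b 1) + Mx K y i 2 * (x * ?b 2)"
    unfolding e by (simp add: algebra_simps)
  also have "\<dots> = (\<Sum>j<3. (\<Sum>k<3. Mx K y i k * Mx K x k j) * ?b j)"
    unfolding e0 e1 e2 sum3 by (simp add: algebra_simps)
  finally show "x * y * ?b i = (\<Sum>j<3. (\<Sum>k<3. Mx K y i k * Mx K x k j) * ?b j)" .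
qed

lemma norm_mult:
  assumes K: "real_cubic_field K" and x: "x \<in> K" and y: "y \<in> K"
  shows "cf_norm K (x*y) = cf_norm K x * cf_norm K y"
proof -
  have "cf_norm K (x*y) = det3 (\<lambda>i j. \<Sum>k<3. Mx K y i k * Mx K x k j)"
    unfolding norm_Mx by (rule det3_cong) (simp add: Mx_mult[OF K x y])
  then show ?thesis by (simp add: det3_mult norm_Mx)
qed

lemma norm_rat:
  assumes K: "real_cubic_field K" and c: "c \<in> \<rat>"
  shows "cf_norm K c = c^3"
proof -
  have cK: "c \<in> K" by (rule rcf_rat[OF K c])
  have "Mx K c i j = (if i = j then c else 0)" if "i < 3" "j < 3" for i j
  proof (rule Mx_unique[OF K cK _ _ that(2)])
    show "\<And>j. (if i = j then c else 0) \<in> \<rat>" using c by simp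
    have "i = 0 \<or> i = 1 \<or> i = 2" using that by auto
    then show "c * bvec (cf_basis K) i = (\<Sum>j<3. (if i = j then c else 0) * bvec (cf_basis K) j)"
      by (auto simp: sum3)
  qed
  then have "cf_norm K c = det3 (\<lambda>i j. if i = j then c else 0)"
    unfolding norm_Mx by (intro det3_cong) auto
  then show ?thesis by (simp add: det3_def power3_eq_cube)
qed

lemma norm_rat_val: "real_cubic_field K \<Longrightarrow> x \<in> K \<Longrightarrow> cf_norm K x \<in> \<rat>"
  unfolding norm_Mx det3_def using Mx_spec(2)[of K x] by auto

lemma norm_nz:
  assumes K: "real_cubic_field K" and x: "x \<in> K" "x \<noteq> 0"
  shows "cf_norm K x \<noteq> 0"
proof -
  have "cf_norm K (x * inverse x) = cf_norm K x * cf_norm K (inverse x)"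
    by (rule norm_mult[OF K x(1) rcf_props(5)[OF K x]])
  moreover have "cf_norm K (x * inverse x) = 1" using x norm_rat[OF K, of 1] by simp
  ultimately show ?thesis by auto
qed

lemma norm_pow:
  assumes K: "real_cubic_field K" and x: "x \<in> K"
  shows "cf_norm K (x^m) = cf_norm K x ^ m"
proof (induction m)
  case 0 then show ?case using norm_rat[OF K, of 1] by simp
next
  case (Suc m)
  have "x^m \<in> K" by (induction m) (use x rcf_props[OF K] in auto)
  then show ?case using Suc norm_mult[OF K x] by simp
qed

lemma f_inj:
  assumes K: "real_cubic_field K" and pq: "p > 0" "q > 0" "\<not> 3 dvd p"
    and x: "x \<in> K" "x > 0" and y: "y \<in> K" "y > 0" and xy: "x \<noteq> y"
  shows "x powr (real p / real q) / \<bar>cf_norm K x\<bar> \<noteq> y powr (real p / real q) / \<bar>cf_norm K y\<bar>"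
proof
  let ?r = "real p / real q"
  assume eq: "x powr ?r / \<bar>cf_norm K x\<bar> = y powr ?r / \<bar>cf_norm K y\<bar>"
  define u where "u = x / y"
  have uK: "u \<in> K" unfolding u_def by (rule rcf_div[OF K x(1) y(1)])
  have u0: "u > 0" unfolding u_def using x y by simp
  have u1: "u \<noteq> 1" unfolding u_def using x y xy by simp
  have xu: "x = u * y" unfolding u_def using y by simp
  have Nx: "cf_norm K x = cf_norm K u * cf_norm K y" unfolding xu by (rule norm_mult[OF K uK y(1)])
  have Nu: "cf_norm K u \<noteq> 0" by (rule norm_nz[OF K uK]) (use u0 in simp)
  have Ny: "cf_norm K y \<noteq> 0" by (rule norm_nz[OF K y(1)]) (use y in simp)
  have px: "x powr ?r = u powr ?r * y powr ?r" unfolding xu by (rule powr_mult)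
  have ypos: "y powr ?r > 0" using y by simp
  from eq have "u powr ?r * y powr ?r / (\<bar>cf_norm K u\<bar> * \<bar>cf_norm K y\<bar>) = y powr ?r / \<bar>cf_norm K y\<bar>"
    by (simp add: px Nx abs_mult)
  then have us: "u powr ?r = \<bar>cf_norm K u\<bar>" using ypos Nu Ny by (simp add: field_simps)
  define s where "s = \<bar>cf_norm K u\<bar>"
  have sQ: "s \<in> \<rat>" unfolding s_def using norm_rat_val[OF K uK]
    by (cases "cf_norm K u \<ge> 0") auto
  have s0: "s > 0" unfolding s_def using Nu by simp
  have "?r * real q = real p" using pq by simp
  then have "u ^ p = u powr (?r * real q)" using u0 by (simp add: powr_realpow)
  also have "\<dots> = s ^ q" unfolding powr_powr[symmetric] us s_def[symmetric] using s0 by (rule powr_realpow)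
  finally have up: "u ^ p = s ^ q" .
  have "cf_norm K (u ^ p) = cf_norm K u ^ p" by (rule norm_pow[OF K uK])
  moreover have "cf_norm K (u ^ p) = (s^q)^3" unfolding up by (rule norm_rat[OF K]) (use sQ in simp)
  ultimately have h: "cf_norm K u ^ p = (u^p)^3" unfolding up by simp
  have "s ^ p = \<bar>cf_norm K u ^ p\<bar>" unfolding s_def by (rule power_abs[symmetric])
  also have "\<dots> = (u^p)^3" unfolding h using u0 by simp
  also have "\<dots> = (u^3)^p" by (metis power_mult mult.commute)
  finally have "s ^ p = (u^3) ^ p" .
  then have "s = u^3" using pq s0 u0 by (intro power_eq_imp_eq_base[of s p "u^3"]) auto
  then have "u powr ?r = u ^ 3" using us unfolding s_def by simp
  then have "u powr ?r = u powr 3" using u0 powr_realpow[of u 3] by simp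
  then have "?r = 3" using powr_inj[OF u0 u1] by blast
  then have "real p = 3 * real q" using pq by (simp add: field_simps)
  then have "p = 3 * q" by linarith
  then show False using pq by simp
qed

definition fv :: "real set \<Rightarrow> real \<Rightarrow> real \<Rightarrow> real" where
  "fv K r z = z powr r / \<bar>cf_norm K z\<bar>"

lemma vval_eq: "vval K r p i j = fv K r (coordab p i) * fv K r (coordab p j)"
  unfolding vval_def fv_def by (simp add: abs_mult)

lemma fv_pos: "real_cubic_field K \<Longrightarrow> z \<in> K \<Longrightarrow> z > 0 \<Longrightarrow> fv K r z > 0"
  unfolding fv_def using norm_nz[of K z] by simp

lemma fv_mult: "real_cubic_field K \<Longrightarrow> z \<in> K \<Longrightarrow> w \<in> K \<Longrightarrow> fv K r (z * w) = fv K r z * fv K r w"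
  unfolding fv_def by (simp add: norm_mult powr_mult abs_mult)

lemma indep_transform:
  assumes "rat_indep3 x0 x1 x2"
    and "\<And>a b c. a\<in>\<rat> \<Longrightarrow> b\<in>\<rat> \<Longrightarrow> c\<in>\<rat> \<Longrightarrow> f a b c \<in> \<rat> \<and> g a b c \<in> \<rat> \<and> h a b c \<in> \<rat> \<and>
            a*y0+b*y1+c*y2 = f a b c * x0 + g a b c * x1 + h a b c * x2"
    and "\<And>a b c. f a b c = 0 \<Longrightarrow> g a b c = 0 \<Longrightarrow> h a b c = 0 \<Longrightarrow> a = 0 \<and> b = 0 \<and> c = 0"
  shows "rat_indep3 y0 y1 y2"
  unfolding rat_indep3_def
proof (intro allI impI)
  fix a b c assume h: "a \<in> \<rat> \<and> b \<in> \<rat> \<and> c \<in> \<rat> \<and> a * y0 + b * y1 + c * y2 = 0"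
  then have "f a b c \<in> \<rat> \<and> g a b c \<in> \<rat> \<and> h a b c \<in> \<rat> \<and> f a b c * x0 + g a b c * x1 + h a b c * x2 = 0"
    using assms(2)[of a b c] by auto
  then have "f a b c = 0 \<and> g a b c = 0 \<and> h a b c = 0" using assms(1) unfolding rat_indep3_def by blast
  then show "a = 0 \<and> b = 0 \<and> c = 0" using assms(3) by blast
qed

lemma indep_scale:
  assumes "rat_indep3 x0 x1 x2" "d \<noteq> 0"
  shows "rat_indep3 (x0/d) (x1/d) (x2/d)"
  unfolding rat_indep3_def
proof (intro allI impI)
  fix a b c assume h: "a \<in> \<rat> \<and> b \<in> \<rat> \<and> c \<in> \<rat> \<and> a * (x0/d) + b * (x1/d) + c * (x2/d) = 0"
  then have "a * x0 + b * x1 + c * x2 = 0" using assms(2) by (simp add: field_simps)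
  then show "a = 0 \<and> b = 0 \<and> c = 0" using h assms(1) unfolding rat_indep3_def by blast
qed

lemma indep_coord: "rat_indep3 1 a b \<longleftrightarrow> rat_indep3 (1 - a - b) a b"
proof
  assume "rat_indep3 1 a b"
  then show "rat_indep3 (1 - a - b) a b"
    by (rule indep_transform[where f="\<lambda>a b c. a" and g="\<lambda>a b c. b - a" and h="\<lambda>a b c. c - a"])
       (auto simp: algebra_simps)
next
  assume "rat_indep3 (1 - a - b) a b"
  then show "rat_indep3 1 a b"
    by (rule indep_transform[where f="\<lambda>a b c. a" and g="\<lambda>a b c. b + a" and h="\<lambda>a b c. c + a"])
       (auto simp: algebra_simps)
qed

definition ind3 :: "(nat \<Rightarrow> real) \<Rightarrow> bool" where
  "ind3 x = rat_indep3 (x 0) (x 1) (x 2)"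

lemma Ind_iff: "(i,j) \<in> Ind \<longleftrightarrow> i < 3 \<and> j < 3 \<and> i \<noteq> j"
  unfolding Ind_def by auto

lemma Ind_cases: "(i,j) \<in> Ind \<Longrightarrow> (i,j) = (0,1) \<or> (i,j) = (1,0) \<or> (i,j) = (0,2) \<or> (i,j) = (2,0) \<or> (i,j) = (1,2) \<or> (i,j) = (2,1)"
  unfolding Ind_def by auto

lemma indep_shift:
  assumes "ind3 x" "(i,j) \<in> Ind"
  shows "ind3 (\<lambda>l. if l = i then x i - x j else x l)"
  using Ind_cases[OF assms(2)]
proof (elim disjE)
  assume ij: "(i,j) = (0,1)"
  have "rat_indep3 (x 0 - x 1) (x 1) (x 2)"
    by (rule indep_transform[where f="\<lambda>a b c. a" and g="\<lambda>a b c. b - a" and h="\<lambda>a b c. c", OF assms(1)[unfolded ind3_def]])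
       (auto simp: algebra_simps)
  then show ?thesis using ij by (simp add: ind3_def)
next
  assume ij: "(i,j) = (1,0)"
  have "rat_indep3 (x 0) (x 1 - x 0) (x 2)"
    by (rule indep_transform[where f="\<lambda>a b c. a - b" and g="\<lambda>a b c. b" and h="\<lambda>a b c. c", OF assms(1)[unfolded ind3_def]])
       (auto simp: algebra_simps)
  then show ?thesis using ij by (simp add: ind3_def)
next
  assume ij: "(i,j) = (0,2)"
  have "rat_indep3 (x 0 - x 2) (x 1) (x 2)"
    by (rule indep_transform[where f="\<lambda>a b c. a" and g="\<lambda>a b c. b" and h="\<lambda>a b c. c - a", OF assms(1)[unfolded ind3_def]])
       (auto simp: algebra_simps)
  then show ?thesis using ij by (simp add: ind3_def)
next
  assume ij: "(i,j) = (2,0)"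
  have "rat_indep3 (x 0) (x 1) (x 2 - x 0)"
    by (rule indep_transform[where f="\<lambda>a b c. a - c" and g="\<lambda>a b c. b" and h="\<lambda>a b c. c", OF assms(1)[unfolded ind3_def]])
       (auto simp: algebra_simps)
  then show ?thesis using ij by (simp add: ind3_def)
next
  assume ij: "(i,j) = (1,2)"
  have "rat_indep3 (x 0) (x 1 - x 2) (x 2)"
    by (rule indep_transform[where f="\<lambda>a b c. a" and g="\<lambda>a b c. b" and h="\<lambda>a b c. c - b", OF assms(1)[unfolded ind3_def]])
       (auto simp: algebra_simps)
  then show ?thesis using ij by (simp add: ind3_def)
next
  assume ij: "(i,j) = (2,1)"
  have "rat_indep3 (x 0) (x 1) (x 2 - x 1)"
    by (rule indep_transform[where f="\<lambda>a b c. a" and g="\<lambda>a b c. b - c" and h="\<lambda>a b c. c", OF assms(1)[unfolded ind3_def]])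
       (auto simp: algebra_simps)
  then show ?thesis using ij by (simp add: ind3_def)
qed

lemma ind3_distinct:
  assumes "ind3 x" "l < 3" "m < 3" "l \<noteq> m"
  shows "x l \<noteq> x m"
proof
  assume e: "x l = x m"
  have "l = 0 \<and> m = 1 \<or> l = 1 \<and> m = 0 \<or> l = 0 \<and> m = 2 \<or> l = 2 \<and> m = 0 \<or> l = 1 \<and> m = 2 \<or> l = 2 \<and> m = 1"
    using assms(2-4) by auto
  moreover have key: "\<And>a b c. a \<in> \<rat> \<Longrightarrow> b \<in> \<rat> \<Longrightarrow> c \<in> \<rat> \<Longrightarrow> a * x 0 + b * x 1 + c * x 2 = 0 \<Longrightarrow> a = 0 \<and> b = 0 \<and> c = 0"
    using assms(1) unfolding ind3_def rat_indep3_def by blast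
  ultimately show False using e
  proof (elim disjE)
    assume "l = 0 \<and> m = 1" then show False using key[of 1 "-1" 0] e by simp
  next
    assume "l = 1 \<and> m = 0" then show False using key[of 1 "-1" 0] e by simp
  next
    assume "l = 0 \<and> m = 2" then show False using key[of 1 0 "-1"] e by simp
  next
    assume "l = 2 \<and> m = 0" then show False using key[of 1 0 "-1"] e by simp
  next
    assume "l = 1 \<and> m = 2" then show False using key[of 0 1 "-1"] e by simp
  next
    assume "l = 2 \<and> m = 1" then show False using key[of 0 1 "-1"] e by simp
  qed
qed

lemma pt_props:
  assumes K: "real_cubic_field K" and p: "p \<in> DeltaK K"
  shows "\<And>l. l < 3 \<Longrightarrow> coordab p l \<in> K" "\<And>l. l < 3 \<Longrightarrow> coordab p l > 0"
    "ind3 (coordab p)" "\<And>l m. l < 3 \<Longrightarrow> m < 3 \<Longrightarrow> l \<noteq> m \<Longrightarrow> coordab p l \<noteq> coordab p m"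
    "p \<in> Delta" "coordab p 0 + coordab p 1 + coordab p 2 = 1"
proof -
  obtain a b where ab: "p = (a,b)" by (cases p)
  have h: "a \<in> K" "b \<in> K" "rat_indep3 1 a b" "a > 0" "b > 0" "a + b < 1"
    using p unfolding ab DeltaK_def by auto
  have g: "1 - a - b \<in> K" using rcf_diff[OF K rcf_diff[OF K rcf_props(1)[OF K] h(1)] h(2)] .
  show "coordab p l \<in> K" if "l < 3" for l using that h g by (auto simp: ab coordab_def)
  show "coordab p l > 0" if "l < 3" for l using that h by (auto simp: ab coordab_def)
  show i3: "ind3 (coordab p)" using h(3) unfolding ind3_def ab coordab_def indep_coord by simp
  show "coordab p l \<noteq> coordab p m" if "l < 3" "m < 3" "l \<noteq> m" for l m
    by (rule ind3_distinct[OF i3 that])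
  show "p \<in> Delta" using h unfolding ab Delta_def by auto
  show "coordab p 0 + coordab p 1 + coordab p 2 = 1" unfolding ab coordab_def by simp
qed

lemma tri_iff:
  assumes "(i,j) \<in> Ind"
  shows "p \<in> tri (i,j) \<longleftrightarrow> p \<in> Delta \<and> coordab p j \<le> coordab p i"
proof -
  obtain a b where ab: "p = (a,b)" by (cases p)
  show ?thesis using Ind_cases[OF assms] unfolding ab
    by (elim disjE) (auto simp: tri_def coordab_def)
qed

lemma Tmap_coord:
  assumes "(i,j) \<in> Ind" "coordab p j \<noteq> 1" "l < 3"
  shows "coordab (Tmap (i,j) p) l = (if l = i then coordab p i - coordab p j else coordab p l) / (1 - coordab p j)"
proof -
  obtain a b where ab: "p = (a,b)" by (cases p)
  have l: "l = 0 \<or> l = 1 \<or> l = 2" using assms(3) by auto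
  have nz: "1 - coordab p j \<noteq> 0" using assms(2) by simp
  show ?thesis using Ind_cases[OF assms(1)]
  proof (elim disjE)
    assume ij: "(i,j) = (0,1)"
    then have d: "1 - a \<noteq> 0" using nz unfolding ab coordab_def by auto
    show ?thesis using l ij d unfolding ab by (auto simp: Tmap_def coordab_def divide_simps)
  next
    assume ij: "(i,j) = (1,0)"
    then have d: "a + b \<noteq> 0" using nz unfolding ab coordab_def by auto
    show ?thesis using l ij d unfolding ab by (auto simp: Tmap_def coordab_def divide_simps)
  next
    assume ij: "(i,j) = (0,2)"
    then have d: "1 - b \<noteq> 0" using nz unfolding ab coordab_def by auto
    show ?thesis using l ij d unfolding ab by (auto simp: Tmap_def coordab_def divide_simps)
  next
    assume ij: "(i,j) = (2,0)"
    then have d: "a + b \<noteq> 0" using nz unfolding ab coordab_def by auto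
    show ?thesis using l ij d unfolding ab by (auto simp: Tmap_def coordab_def divide_simps)
  next
    assume ij: "(i,j) = (1,2)"
    then have d: "1 - b \<noteq> 0" using nz unfolding ab coordab_def by auto
    show ?thesis using l ij d unfolding ab by (auto simp: Tmap_def coordab_def divide_simps)
  next
    assume ij: "(i,j) = (2,1)"
    then have d: "1 - a \<noteq> 0" using nz unfolding ab coordab_def by auto
    show ?thesis using l ij d unfolding ab by (auto simp: Tmap_def coordab_def divide_simps)
  qed
qed

lemma coord_lt1:
  assumes K: "real_cubic_field K" and p: "p \<in> DeltaK K" and j: "j < 3"
  shows "coordab p j < 1"
proof -
  have "j = 0 \<or> j = 1 \<or> j = 2" using j by auto
  then show ?thesis using pt_props(2)[OF K p, of 0] pt_props(2)[OF K p, of 1] pt_props(2)[OF K p, of 2]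
      pt_props(6)[OF K p] by auto
qed

lemma Tmap_props:
  assumes K: "real_cubic_field K" and p: "p \<in> DeltaK K" and ij: "(i,j) \<in> Ind"
    and lt: "coordab p j < coordab p i"
  shows "Tmap (i,j) p \<in> DeltaK K"
    "\<And>l. l < 3 \<Longrightarrow> coordab (Tmap (i,j) p) l = (if l = i then coordab p i - coordab p j else coordab p l) * inverse (1 - coordab p j)"
    "1 - coordab p j \<in> K" "1 - coordab p j > 0"
proof -
  let ?x = "coordab p"
  define c where "c = 1 - ?x j"
  define z where "z = (\<lambda>l. if l = i then ?x i - ?x j else ?x l)"
  have i3: "i < 3" and j3: "j < 3" using ij by (auto simp: Ind_iff)
  have c0: "c > 0" unfolding c_def using coord_lt1[OF K p j3] by simp
  show "1 - coordab p j > 0" using c0 c_def by simp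
  have cK: "c \<in> K" unfolding c_def by (rule rcf_diff[OF K rcf_props(1)[OF K] pt_props(1)[OF K p j3]])
  then show "1 - coordab p j \<in> K" by (simp add: c_def)
  have zK: "z l \<in> K" if "l < 3" for l
    unfolding z_def using pt_props(1)[OF K p] that i3 j3 rcf_diff[OF K] by auto
  have zpos: "z l > 0" if "l < 3" for l
    unfolding z_def using pt_props(2)[OF K p] that lt by auto
  have y: "coordab (Tmap (i,j) p) l = z l / c" if "l < 3" for l
    unfolding z_def c_def using Tmap_coord[OF ij _ that] c0 c_def by simp
  then show "\<And>l. l < 3 \<Longrightarrow> coordab (Tmap (i,j) p) l = (if l = i then coordab p i - coordab p j else coordab p l) * inverse (1 - coordab p j)"
    by (simp add: z_def c_def divide_inverse)
  obtain a' b' where Q: "Tmap (i,j) p = (a',b')" by (cases "Tmap (i,j) p")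
  have y1: "a' = z 1 / c" using y[of 1] by (simp add: Q coordab_def)
  have y2: "b' = z 2 / c" using y[of 2] by (simp add: Q coordab_def)
  have y0: "1 - a' - b' = z 0 / c" using y[of 0] by (simp add: Q coordab_def)
  have iz: "ind3 z" unfolding z_def by (rule indep_shift[OF pt_props(3)[OF K p] ij])
  have "rat_indep3 (z 0 / c) (z 1 / c) (z 2 / c)" using indep_scale[OF iz[unfolded ind3_def]] c0 by simp
  then have ind: "rat_indep3 1 a' b'" unfolding indep_coord y0[symmetric] y1[symmetric] y2[symmetric] .
  have "a' \<in> K" "b' \<in> K" unfolding y1 y2 using rcf_div[OF K zK cK] by auto
  moreover have "a' > 0" "b' > 0" unfolding y1 y2 using zpos c0 by auto
  moreover have "1 - a' - b' > 0" unfolding y0 using zpos[of 0] c0 by auto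
  ultimately show "Tmap (i,j) p \<in> DeltaK K" using ind unfolding Q DeltaK_def by auto
qed

lemma idx_lemma:
  assumes "(i,j) \<in> Ind" "(i',j') \<in> Ind" "{i',j'} \<noteq> {i,j}"
  shows "(i' = 3-i-j \<and> (j' = i \<or> j' = j)) \<or> (j' = 3-i-j \<and> (i' = i \<or> i' = j))"
  using Ind_cases[OF assms(1)] Ind_cases[OF assms(2)] assms(3)
  by (elim disjE) (simp_all add: doubleton_eq_iff)

lemma F_distinct:
  assumes K: "real_cubic_field K" and pq: "p > 0" "q > 0" "\<not> 3 dvd p" and P: "P \<in> DeltaK K"
    and lm: "l < 3" "m < 3" "l \<noteq> m"
  shows "fv K (real p / real q) (coordab P l) \<noteq> fv K (real p / real q) (coordab P m)"
  unfolding fv_def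
  by (rule f_inj[OF K pq pt_props(1)[OF K P lm(1)] pt_props(2)[OF K P lm(1)]
        pt_props(1)[OF K P lm(2)] pt_props(2)[OF K P lm(2)] pt_props(4)[OF K P lm]])

lemma eps_char:
  assumes K: "real_cubic_field K" and P: "P \<in> DeltaK K" and ij: "(i,j) \<in> Ind"
    and lt: "coordab P j < coordab P i"
    and Fi: "fv K r (coordab P (3-i-j)) < fv K r (coordab P i)"
    and Fj: "fv K r (coordab P (3-i-j)) < fv K r (coordab P j)"
  shows "eps K r P = (i,j)"
proof -
  let ?F = "\<lambda>l. fv K r (coordab P l)"
  let ?V = "\<lambda>a b. vval K r P a b"
  have Fpos: "?F l > 0" if "l < 3" for l using fv_pos[OF K pt_props(1)[OF K P that] pt_props(2)[OF K P that]] .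
  have i3: "i < 3" "j < 3" "3-i-j < 3" using ij by (auto simp: Ind_iff)
  have big: "?V a b < ?V i j" if ab: "(a,b) \<in> Ind" "{a,b} \<noteq> {i,j}" for a b
  proof -
    have m1: "?F (3-i-j) * ?F i < ?F i * ?F j" using Fj Fpos[OF i3(1)] by (simp add: mult.commute)
    have m2: "?F (3-i-j) * ?F j < ?F i * ?F j" using Fi Fpos[OF i3(2)] by simp
    show ?thesis using idx_lemma[OF ij ab] m1 m2 unfolding vval_eq
      by (auto simp: mult.commute)
  qed
  show ?thesis unfolding eps_def
  proof (rule the_equality)
    show "case (i, j) of (i, j) \<Rightarrow> (i, j) \<in> Ind \<and>
        (\<forall>(i', j')\<in>Ind. {i', j'} \<noteq> {i, j} \<longrightarrow> vval K r P i' j' < vval K r P i j) \<and> P \<in> tri (i, j)"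
      using ij big lt pt_props(5)[OF K P] tri_iff[OF ij] by auto
  next
    fix e assume h: "case e of (i, j) \<Rightarrow> (i, j) \<in> Ind \<and>
        (\<forall>(i', j')\<in>Ind. {i', j'} \<noteq> {i, j} \<longrightarrow> vval K r P i' j' < vval K r P i j) \<and> P \<in> tri (i, j)"
    obtain a b where e: "e = (a,b)" by (cases e)
    have ab: "(a,b) \<in> Ind" and hb: "\<forall>(i', j')\<in>Ind. {i', j'} \<noteq> {a, b} \<longrightarrow> ?V i' j' < ?V a b"
      and tr: "P \<in> tri (a,b)" using h e by auto
    have "{a,b} = {i,j}"
    proof (rule ccontr)
      assume ne: "{a,b} \<noteq> {i,j}"
      then have "?V a b < ?V i j" using big ab by blast
      moreover have "?V i j < ?V a b" using hb ij ne by auto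
      ultimately show False by simp
    qed
    then have "(a,b) = (i,j) \<or> (a,b) = (j,i)" unfolding doubleton_eq_iff by auto
    moreover have "(a,b) \<noteq> (j,i)"
    proof
      assume "(a,b) = (j,i)"
      then have "P \<in> tri (j,i)" using tr by simp
      moreover have "(j,i) \<in> Ind" using ij by (auto simp: Ind_iff)
      ultimately show False using tri_iff[of j i P] lt by auto
    qed
    ultimately show "e = (i,j)" using e by auto
  qed
qed

lemma exists_from_min:
  fixes x F :: "nat \<Rightarrow> real"
  assumes "(a,b) \<in> Ind" "F (3-a-b) < F a" "F (3-a-b) < F b" "x a \<noteq> x b"
  shows "\<exists>i j. (i,j) \<in> Ind \<and> x j < x i \<and> F (3-i-j) < F i \<and> F (3-i-j) < F j"
proof (cases "x b < x a")
  case True then show ?thesis using assms by blast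
next
  case False
  then have "x a < x b" using assms(4) by auto
  moreover have "(b,a) \<in> Ind" using assms(1) by (auto simp: Ind_iff)
  moreover have "3-b-a = 3-a-b" by simp
  ultimately show ?thesis using assms by metis
qed

lemma eps_exists:
  assumes K: "real_cubic_field K" and pq: "p > 0" "q > 0" "\<not> 3 dvd p" and P: "P \<in> DeltaK K"
  shows "\<exists>i j. (i,j) \<in> Ind \<and> coordab P j < coordab P i \<and>
     fv K (real p / real q) (coordab P (3-i-j)) < fv K (real p / real q) (coordab P i) \<and>
     fv K (real p / real q) (coordab P (3-i-j)) < fv K (real p / real q) (coordab P j)"
proof -
  let ?F = "\<lambda>l. fv K (real p / real q) (coordab P l)"
  let ?x = "coordab P"
  have d01: "?F 0 \<noteq> ?F 1" and d02: "?F 0 \<noteq> ?F 2" and d12: "?F 1 \<noteq> ?F 2"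
    using F_distinct[OF K pq P] by auto
  have x01: "?x 0 \<noteq> ?x 1" and x02: "?x 0 \<noteq> ?x 2" and x12: "?x 1 \<noteq> ?x 2"
    using pt_props(4)[OF K P] by auto
  have I12: "(1,2) \<in> Ind" and I02: "(0,2) \<in> Ind" and I01: "(0,1) \<in> Ind" by (auto simp: Ind_iff)
  have "(?F 0 < ?F 1 \<and> ?F 0 < ?F 2) \<or> (?F 1 < ?F 0 \<and> ?F 1 < ?F 2) \<or> (?F 2 < ?F 0 \<and> ?F 2 < ?F 1)"
    using d01 d02 d12 by argo
  then show ?thesis
  proof (elim disjE)
    assume "?F 0 < ?F 1 \<and> ?F 0 < ?F 2"
    then show ?thesis using exists_from_min[OF I12, of ?F ?x] x12 by simp
  next
    assume "?F 1 < ?F 0 \<and> ?F 1 < ?F 2"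
    then show ?thesis using exists_from_min[OF I02, of ?F ?x] x02 by simp
  next
    assume "?F 2 < ?F 0 \<and> ?F 2 < ?F 1"
    then show ?thesis using exists_from_min[OF I01, of ?F ?x] x01 by simp
  qed
qed

lemma Tcf_pres:
  assumes K: "real_cubic_field K" and pq: "p > 0" "q > 0" "\<not> 3 dvd p" and P: "P \<in> DeltaK K"
  shows "Tcf K (real p / real q) P \<in> DeltaK K"
proof -
  obtain i j where h: "(i,j) \<in> Ind" "coordab P j < coordab P i"
     "fv K (real p / real q) (coordab P (3-i-j)) < fv K (real p / real q) (coordab P i)"
     "fv K (real p / real q) (coordab P (3-i-j)) < fv K (real p / real q) (coordab P j)"
    using eps_exists[OF K pq P] by blast
  have "eps K (real p / real q) P = (i,j)" by (rule eps_char[OF K P h])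
  then show ?thesis unfolding Tcf_def using Tmap_props(1)[OF K P h(1,2)] by simp
qed

lemma iter_pres:
  assumes K: "real_cubic_field K" and pq: "p > 0" "q > 0" "\<not> 3 dvd p" and P: "P \<in> DeltaK K"
  shows "(Tcf K (real p / real q) ^^ n) P \<in> DeltaK K"
  by (induction n) (use P Tcf_pres[OF K pq] in auto)

lemma third_facts:
  fixes i j :: nat
  assumes "i < 3" "j < 3" "i \<noteq> j"
  shows "3-i-j < 3" "3-i-j \<noteq> i" "3-i-j \<noteq> j" "3 - i - (3-i-j) = j" "3 - (3-i-j) - i = j"
    "\<And>k. k < 3 \<Longrightarrow> k \<noteq> i \<Longrightarrow> k \<noteq> j \<Longrightarrow> k = 3-i-j"
proof -
  have "i = 0 \<or> i = 1 \<or> i = 2" "j = 0 \<or> j = 1 \<or> j = 2" using assms(1,2) by auto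
  then show "3-i-j < 3" "3-i-j \<noteq> i" "3-i-j \<noteq> j" "3 - i - (3-i-j) = j" "3 - (3-i-j) - i = j"
    using assms(3) by auto
  fix k :: nat assume "k < 3" "k \<noteq> i" "k \<noteq> j"
  then have "k = 0 \<or> k = 1 \<or> k = 2" by auto
  then show "k = 3-i-j" using \<open>i = 0 \<or> i = 1 \<or> i = 2\<close> \<open>j = 0 \<or> j = 1 \<or> j = 2\<close> \<open>k \<noteq> i\<close> \<open>k \<noteq> j\<close> assms(3) by auto
qed

theorem theorem2p6:
  fixes K :: "real set" and p q n :: nat and \<alpha> \<beta> :: real
  assumes "real_cubic_field K"
    and "p > 0" and "q > 0" and "coprime p q" and "\<not> 3 dvd p"
    and "(\<alpha>, \<beta>) \<in> DeltaK K"
  shows "let r = real p / real q;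
             e = eps K r ((Tcf K r ^^ n) (\<alpha>, \<beta>));
             e' = eps K r ((Tcf K r ^^ Suc n) (\<alpha>, \<beta>))
         in \<forall>k \<in> {0,1,2}. k \<noteq> fst e \<and> k \<noteq> snd e \<longrightarrow>
              e' \<noteq> (fst e, k) \<and> e' \<noteq> (k, fst e)"
proof -
  note K = assms(1) and pq = assms(2,3,5)
  define r where "r = real p / real q"
  define P where "P = (Tcf K r ^^ n) (\<alpha>, \<beta>)"
  have PD: "P \<in> DeltaK K" unfolding P_def r_def by (rule iter_pres[OF K pq assms(6)])
  let ?F = "\<lambda>X l. fv K r (coordab X l)"
  obtain i j where h: "(i,j) \<in> Ind" "coordab P j < coordab P i"
     "?F P (3-i-j) < ?F P i" "?F P (3-i-j) < ?F P j"
    using eps_exists[OF K pq PD] unfolding r_def by blast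
  have e: "eps K r P = (i,j)" by (rule eps_char[OF K PD h])
  define Q where "Q = Tmap (i,j) P"
  have QT: "(Tcf K r ^^ Suc n) (\<alpha>, \<beta>) = Q" unfolding Q_def by (simp add: Tcf_def e P_def[symmetric])
  have QD: "Q \<in> DeltaK K" unfolding Q_def by (rule Tmap_props(1)[OF K PD h(1,2)])
  have i3: "i < 3" "j < 3" "i \<noteq> j" using h(1) by (auto simp: Ind_iff)
  define c where "c = 1 - coordab P j"
  have cK: "c \<in> K" and c0: "c > 0" unfolding c_def using Tmap_props(3,4)[OF K PD h(1,2)] by auto
  have icK: "inverse c \<in> K" using rcf_props(5)[OF K cK] c0 by simp
  have g0: "fv K r (inverse c) > 0" using fv_pos[OF K icK] c0 by simp
  have FQ: "?F Q l = ?F P l * fv K r (inverse c)" if "l < 3" "l \<noteq> i" for l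
  proof -
    have "coordab Q l = coordab P l * inverse c"
      unfolding Q_def c_def using Tmap_props(2)[OF K PD h(1,2) that(1)] that(2) by simp
    then show ?thesis using fv_mult[OF K pt_props(1)[OF K PD that(1)] icK] by simp
  qed
  let ?k = "3-i-j"
  have k3: "?k < 3" "?k \<noteq> i" "?k \<noteq> j" using third_facts[OF i3] by blast+
  have Qkj: "?F Q ?k < ?F Q j" unfolding FQ[OF k3(1,2)] FQ[OF i3(2) i3(3)[symmetric]]
    using h(4) g0 by (rule mult_strict_right_mono)
  obtain a b where h': "(a,b) \<in> Ind" "coordab Q b < coordab Q a"
     "?F Q (3-a-b) < ?F Q a" "?F Q (3-a-b) < ?F Q b"
    using eps_exists[OF K pq QD] unfolding r_def by blast
  have e': "eps K r Q = (a,b)" by (rule eps_char[OF K QD h'])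
  have n1: "(a,b) \<noteq> (i,?k)"
  proof
    assume "(a,b) = (i,?k)"
    then have ab: "a = i" "b = ?k" by simp_all
    have j': "3-a-b = j" unfolding ab by (rule third_facts(4)[OF i3])
    show False using h'(4)[unfolded j', unfolded ab(2)] Qkj by linarith
  qed
  have n2: "(a,b) \<noteq> (?k,i)"
  proof
    assume "(a,b) = (?k,i)"
    then have ab: "a = ?k" "b = i" by simp_all
    have j': "3-a-b = j" unfolding ab by (rule third_facts(5)[OF i3])
    show False using h'(3)[unfolded j', unfolded ab(1)] Qkj by linarith
  qed
  have "\<forall>k \<in> {0,1,2}. k \<noteq> i \<and> k \<noteq> j \<longrightarrow> (a,b) \<noteq> (i, k) \<and> (a,b) \<noteq> (k, i)"
  proof (intro ballI impI)
    fix k :: nat assume kk: "k \<in> {0,1,2}" "k \<noteq> i \<and> k \<noteq> j"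
    have "k < 3" using kk(1) by auto
    then have "k = ?k" using third_facts(6)[OF i3] kk(2) by blast
    then show "(a,b) \<noteq> (i, k) \<and> (a,b) \<noteq> (k, i)" using n1 n2 by simp
  qed
  then show ?thesis unfolding Let_def r_def[symmetric] P_def[symmetric] QT e e' by simp
qed

end
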